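(* Let $G$ be a countably infinite locally finite group. For every nondecreasing function $f\colon\mathbb{R}_+\to\mathbb{R}_+$ with $\lim_{x\to\infty}f(x)=\infty$ there exists a proper left invariant metric $d_G$ on $G$ such that $f$ is not a $0$-dimensional control function of $(G,d_G)$.
   Context: A group is locally finite if every finitely generated subgroup is finite. A metric $d_G$ on $G$ is proper left invariant if $d_G(gh,gk)=d_G(h,k)$ for all $g,h,k$ and every ball contains finitely many elements. For $s>0$, an $s$-scale chain is a finite sequence $x_0,\dots,x_m$ with $d(x_i,x_{i+1})<s$; the $s$-scale connected components of $X$ are the classes of the relation "joined by an $s$-scale chain". A function $f$ is a $0$-dimensional control function of $(X,d)$ if for every $s>0$ every $s$-scale connected component of $X$ has diameter at most $f(s)$. *)

theory Defs
  imports "HOL-Analysis.Analysis" "HOL-Algebra.Algebra"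
begin

definition locally_finite_group :: "('a, 'b) monoid_scheme \<Rightarrow> bool" where
  "locally_finite_group G \<longleftrightarrow>
     (\<forall>S. finite S \<and> S \<subseteq> carrier G \<longrightarrow> finite (generate G S))"

definition proper_left_invariant_metric :: "('a, 'b) monoid_scheme \<Rightarrow> ('a \<Rightarrow> 'a \<Rightarrow> real) \<Rightarrow> bool" where
  "proper_left_invariant_metric G d \<longleftrightarrow>
     (\<forall>x\<in>carrier G. \<forall>y\<in>carrier G. d x y = 0 \<longleftrightarrow> x = y) \<and>
     (\<forall>x\<in>carrier G. \<forall>y\<in>carrier G. d x y = d y x) \<and>
     (\<forall>x\<in>carrier G. \<forall>y\<in>carrier G. \<forall>z\<in>carrier G. d x z \<le> d x y + d y z) \<and>
     (\<forall>g\<in>carrier G. \<forall>h\<in>carrier G. \<forall>k\<in>carrier G. d (g \<otimes>\<^bsub>G\<^esub> h) (g \<otimes>\<^bsub>G\<^esub> k) = d h k) \<and>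
     (\<forall>x\<in>carrier G. \<forall>r::real. finite {y\<in>carrier G. d x y \<le> r})"

definition scale_step :: "'a set \<Rightarrow> ('a \<Rightarrow> 'a \<Rightarrow> real) \<Rightarrow> real \<Rightarrow> 'a \<Rightarrow> 'a \<Rightarrow> bool" where
  "scale_step A dist_fn r a b \<longleftrightarrow> a \<in> A \<and> b \<in> A \<and> dist_fn a b < r"

definition scale_component :: "'a set \<Rightarrow> ('a \<Rightarrow> 'a \<Rightarrow> real) \<Rightarrow> real \<Rightarrow> 'a \<Rightarrow> 'a set" where
  "scale_component A dist_fn r a = {b \<in> A. (scale_step A dist_fn r)\<^sup>*\<^sup>* a b}"

definition zero_dim_control :: "'a set \<Rightarrow> ('a \<Rightarrow> 'a \<Rightarrow> real) \<Rightarrow> (real \<Rightarrow> real) \<Rightarrow> bool" where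
  "zero_dim_control A dist_fn f \<longleftrightarrow>
     (\<forall>r>0. \<forall>a\<in>A. \<forall>b\<in>scale_component A dist_fn r a. \<forall>c\<in>scale_component A dist_fn r a. dist_fn b c \<le> f r)"

end

theory Submission
  imports Defs "HOL-Real_Asymp.Real_Asymp"
begin

definition wprod :: "('a, 'b) monoid_scheme \<Rightarrow> 'a list \<Rightarrow> 'a" where
  "wprod G xs = foldr (\<lambda>x y. x \<otimes>\<^bsub>G\<^esub> y) xs \<one>\<^bsub>G\<^esub>"

definition wlen :: "('a, 'b) monoid_scheme \<Rightarrow> 'a set \<Rightarrow> 'a \<Rightarrow> nat" where
  "wlen G T x = (LEAST k. \<exists>xs. set xs \<subseteq> T \<and> length xs = k \<and> wprod G xs = x)"

lemma two_pow_beats: "\<exists>n::nat. real (2*n+1)^m < 2^n"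
proof -
  have "((\<lambda>n::nat. real (2*n+1)^m / 2^n) \<longlongrightarrow> 0) at_top" by real_asymp
  then have "eventually (\<lambda>n::nat. real (2*n+1)^m / 2^n < 1) at_top"
    by (rule order_tendstoD) simp
  then obtain n where "real (2*n+1)^m / 2^n < 1" by (auto simp: eventually_at_top_linorder)
  then show ?thesis by (intro exI[of _ n]) (simp add: field_simps)
qed

context group
begin

lemma wprod_Nil[simp]: "wprod G [] = \<one>" by (simp add: wprod_def)
lemma wprod_Cons[simp]: "wprod G (x # xs) = x \<otimes> wprod G xs" by (simp add: wprod_def)

lemma wprod_carrier: "set xs \<subseteq> carrier G \<Longrightarrow> wprod G xs \<in> carrier G"
  by (induction xs) auto

lemma wprod_append: "set xs \<subseteq> carrier G \<Longrightarrow> set ys \<subseteq> carrier G \<Longrightarrow>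
    wprod G (xs @ ys) = wprod G xs \<otimes> wprod G ys"
  by (induction xs) (auto simp: m_assoc wprod_carrier)

lemma wprod_inv: "set xs \<subseteq> carrier G \<Longrightarrow> inv (wprod G xs) = wprod G (rev (map (\<lambda>z. inv z) xs))"
proof (induction xs)
  case Nil then show ?case by simp
next
  case (Cons x xs)
  then have x: "x \<in> carrier G" and xs: "set xs \<subseteq> carrier G" by auto
  have "inv (wprod G (x # xs)) = inv (wprod G xs) \<otimes> inv x"
    using x xs by (simp add: inv_mult_group wprod_carrier)
  also have "\<dots> = wprod G (rev (map (\<lambda>z. inv z) xs)) \<otimes> wprod G [inv x]"
    using Cons x by simp
  also have "\<dots> = wprod G (rev (map (\<lambda>z. inv z) xs) @ [inv x])"
    using x xs by (subst wprod_append) auto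
  finally show ?case by simp
qed

lemma wprod_replicate: "wprod G (xs @ replicate k \<one>) = wprod G xs" if "set xs \<subseteq> carrier G"
proof -
  have "wprod G (replicate k \<one>) = \<one>" by (induction k) auto
  then show ?thesis using that by (subst wprod_append) (auto simp: wprod_carrier)
qed


lemma generate_words:
  assumes "S \<subseteq> carrier G"
  shows "generate G S = {x. \<exists>xs. set xs \<subseteq> S \<union> (\<lambda>z. inv z) ` S \<union> {\<one>} \<and> wprod G xs = x}"
    (is "_ = ?W")
proof
  show "generate G S \<subseteq> ?W"
  proof
    fix x assume "x \<in> generate G S"
    then show "x \<in> ?W"
    proof (induction rule: generate.induct)
      case one then show ?case by (intro CollectI exI[of _ "[]"]) simp
    next
      case (incl h) then show ?case using assms by (intro CollectI exI[of _ "[h]"]) auto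
    next
      case (inv h) then show ?case using assms by (intro CollectI exI[of _ "[inv h]"]) auto
    next
      case (eng h1 h2)
      then obtain xs ys where ws: "set xs \<subseteq> S \<union> (\<lambda>z. inv z) ` S \<union> {\<one>}" "wprod G xs = h1"
        "set ys \<subseteq> S \<union> (\<lambda>z. inv z) ` S \<union> {\<one>}" "wprod G ys = h2" by auto
      moreover have "S \<union> (\<lambda>z. inv z) ` S \<union> {\<one>} \<subseteq> carrier G" using assms by auto
      ultimately have c: "set xs \<subseteq> carrier G" "set ys \<subseteq> carrier G"
        "set (xs @ ys) \<subseteq> S \<union> (\<lambda>z. inv z) ` S \<union> {\<one>}" by auto
      have "wprod G (xs @ ys) = h1 \<otimes> h2" using wprod_append[OF c(1,2)] ws by simp
      note c this
      then show ?case by blast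
    qed
  qed
next
  show "?W \<subseteq> generate G S"
  proof
    fix x assume "x \<in> ?W"
    then obtain xs where xs: "set xs \<subseteq> S \<union> (\<lambda>z. inv z) ` S \<union> {\<one>}" "wprod G xs = x" by auto
    have "wprod G xs \<in> generate G S" using xs(1)
    proof (induction xs)
      case Nil then show ?case by (simp add: generate.one)
    next
      case (Cons a xs)
      then have "a \<in> generate G S" by (auto intro: generate.intros)
      with Cons show ?case by (auto intro: generate.eng)
    qed
    with xs show "x \<in> generate G S" by simp
  qed
qed

lemma growth:
  assumes lf: "locally_finite_group G" and inf: "infinite (carrier G)"
  shows "\<exists>S. finite S \<and> S \<subseteq> carrier G \<and> card S \<le> n \<and> 2^n \<le> card (generate G S)"
proof (induction n)
  case 0
  have "finite (generate G {})" using lf unfolding locally_finite_group_def by auto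
  moreover have "\<one> \<in> generate G {}" by (rule generate.one)
  ultimately have "1 \<le> card (generate G {})" by (metis card_0_eq empty_iff less_one not_le)
  then show ?case by (intro exI[of _ "{}"]) auto
next
  case (Suc n)
  then obtain S where S: "finite S" "S \<subseteq> carrier G" "card S \<le> n" "2^n \<le> card (generate G S)" by blast
  define K where "K = generate G S"
  have finK: "finite K" using lf S unfolding locally_finite_group_def K_def by auto
  have KG: "K \<subseteq> carrier G" using generate_incl[OF S(2)] K_def by simp
  obtain g where g: "g \<in> carrier G" "g \<notin> K" using finK inf by (metis finite_subset subsetI)
  define K' where "K' = generate G (insert g S)"
  have S': "insert g S \<subseteq> carrier G" using S g by auto
  have finK': "finite K'" using lf S S' unfolding locally_finite_group_def K'_def by auto
  have sub1: "K \<subseteq> K'" unfolding K_def K'_def by (rule mono_generate) auto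
  have gK': "g \<in> K'" unfolding K'_def by (rule generate.incl) simp
  have sub2: "(\<lambda>k. g \<otimes> k) ` K \<subseteq> K'" using sub1 gK' unfolding K'_def by (auto intro: generate.eng)
  have disj: "K \<inter> (\<lambda>k. g \<otimes> k) ` K = {}"
  proof (rule ccontr)
    assume "K \<inter> (\<lambda>k. g \<otimes> k) ` K \<noteq> {}"
    then obtain k k' where kk: "k \<in> K" "k' \<in> K" "g \<otimes> k = k'" by auto
    have sg: "subgroup K G" unfolding K_def by (rule generate_is_subgroup[OF S(2)])
    have "g = k' \<otimes> inv k" using kk KG g
      by (metis in_mono inv_solve_right)
    then have "g \<in> K" using kk sg by (simp add: subgroup.m_closed subgroup.m_inv_closed)
    with g show False by simp
  qed
  have inj: "inj_on (\<lambda>k. g \<otimes> k) K" unfolding inj_on_def using KG g by (metis l_cancel subsetD)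
  have "card (K \<union> (\<lambda>k. g \<otimes> k) ` K) = card K + card K"
    using disj finK inj by (simp add: card_Un_disjoint card_image)
  moreover have "card (K \<union> (\<lambda>k. g \<otimes> k) ` K) \<le> card K'"
    using sub1 sub2 finK' by (intro card_mono) auto
  ultimately have "2^Suc n \<le> card K'" using S(4) K_def by simp
  moreover have "card (insert g S) \<le> Suc n" using S by (simp add: card_insert_if)
  ultimately show ?case using S S' unfolding K'_def by (intro exI[of _ "insert g S"]) auto
qed


context
  fixes T assumes T: "T \<subseteq> carrier G" "\<one> \<in> T" "\<And>t. t \<in> T \<Longrightarrow> inv t \<in> T"
begin

lemma wlen_wit:
  assumes "set ys \<subseteq> T" "wprod G ys = x"
  shows "\<exists>xs. set xs \<subseteq> T \<and> length xs = wlen G T x \<and> wprod G xs = x"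
proof -
  have "\<exists>xs. set xs \<subseteq> T \<and> length xs = length ys \<and> wprod G xs = x" using assms by blast
  then have "\<exists>xs. set xs \<subseteq> T \<and> length xs = (LEAST k. \<exists>xs. set xs \<subseteq> T \<and> length xs = k \<and> wprod G xs = x) \<and> wprod G xs = x"
    by (rule LeastI)
  then show ?thesis unfolding wlen_def .
qed

lemma wlen_le: "set xs \<subseteq> T \<Longrightarrow> wlen G T (wprod G xs) \<le> length xs"
  unfolding wlen_def by (rule Least_le) blast

lemma wlen_mult:
  assumes "set xs \<subseteq> T" "wprod G xs = x" "set ys \<subseteq> T" "wprod G ys = y"
  shows "wlen G T (x \<otimes> y) \<le> wlen G T x + wlen G T y"
proof -
  obtain as where a: "set as \<subseteq> T" "length as = wlen G T x" "wprod G as = x" using wlen_wit assms by blast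
  obtain bs where b: "set bs \<subseteq> T" "length bs = wlen G T y" "wprod G bs = y" using wlen_wit assms by blast
  have "wprod G (as @ bs) = x \<otimes> y" using a b T by (subst wprod_append) auto
  moreover have "wlen G T (wprod G (as @ bs)) \<le> length (as @ bs)" using a b by (intro wlen_le) auto
  ultimately show ?thesis using a b by simp
qed

lemma wlen_inv:
  assumes "set xs \<subseteq> T" "wprod G xs = x"
  shows "wlen G T (inv x) \<le> wlen G T x"
proof -
  obtain as where a: "set as \<subseteq> T" "length as = wlen G T x" "wprod G as = x" using wlen_wit assms by blast
  have "inv x = wprod G (rev (map (\<lambda>z. inv z) as))" using a T by (subst wprod_inv[symmetric]) auto
  moreover have "set (rev (map (\<lambda>z. inv z) as)) \<subseteq> T" using a T by auto
  ultimately show ?thesis using wlen_le a by fastforce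
qed

lemma wlen_zero:
  assumes "set xs \<subseteq> T" "wprod G xs = x" "wlen G T x = 0"
  shows "x = \<one>"
  using wlen_wit[OF assms(1,2)] assms(3) by auto

lemma wlen_one: "wlen G T \<one> = 0"
  using wlen_le[of "[]"] by simp

end

lemma key:
  assumes lf: "locally_finite_group G" and cnt: "countable (carrier G)"
    and inf: "infinite (carrier G)"
  shows "\<exists>d. proper_left_invariant_metric G d \<and>
    (\<exists>h\<in>carrier G. (scale_step (carrier G) d 2)\<^sup>*\<^sup>* \<one> h \<and> real m < d \<one> h)"
proof -
  obtain n :: nat where n: "real (2*n+1)^m < 2^n" using two_pow_beats by blast
  then have n': "(2*n+1)^m < (2::nat)^n"
    by (metis of_nat_less_iff of_nat_numeral of_nat_power)
  obtain S where S: "finite S" "S \<subseteq> carrier G" "card S \<le> n" "2^n \<le> card (generate G S)"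
    using growth[OF lf inf] by blast
  define T where "T = S \<union> (\<lambda>z. inv z) ` S \<union> {\<one>}"
  have T: "T \<subseteq> carrier G" "\<one> \<in> T" "\<And>t. t \<in> T \<Longrightarrow> inv t \<in> T"
    using S(2) unfolding T_def by auto
  have finT: "finite T" using S unfolding T_def by auto
  have cardT: "card T \<le> 2*n+1"
  proof -
    have "card T \<le> card (S \<union> (\<lambda>z. inv z) ` S) + card {\<one>}" unfolding T_def by (rule card_Un_le)
    also have "\<dots> \<le> card S + card ((\<lambda>z. inv z) ` S) + 1" using card_Un_le by simp
    also have "\<dots> \<le> card S + card S + 1" using card_image_le[OF S(1)] by simp
    finally show ?thesis using S(3) by simp
  qed
  define W where "W = {x. \<exists>xs. set xs \<subseteq> T \<and> wprod G xs = x}"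
  have WG: "W = generate G S" unfolding W_def T_def using generate_words[OF S(2)] by simp
  have finW: "finite W" using lf S unfolding WG locally_finite_group_def by auto
  have Wc: "W \<subseteq> carrier G" unfolding WG by (rule generate_incl[OF S(2)])
  have Wsub: "subgroup W G" unfolding WG by (rule generate_is_subgroup[OF S(2)])
  have TW: "T \<subseteq> W"
  proof
    fix t assume "t \<in> T" then show "t \<in> W" unfolding W_def using T by (intro CollectI exI[of _ "[t]"]) auto
  qed
  obtain h where h: "h \<in> W" "m < wlen G T h"
  proof (rule ccontr)
    assume "\<not> thesis"
    with that have all: "\<forall>x\<in>W. wlen G T x \<le> m" by force
    have "W \<subseteq> wprod G ` {xs. set xs \<subseteq> T \<and> length xs = m}"
    proof
      fix x assume x: "x \<in> W"
      then obtain ys where "set ys \<subseteq> T" "wprod G ys = x" unfolding W_def by blast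
      then obtain xs where xs: "set xs \<subseteq> T" "length xs = wlen G T x" "wprod G xs = x"
        using wlen_wit[OF T] by blast
      define zs where "zs = xs @ replicate (m - length xs) \<one>"
      have "wprod G zs = x" unfolding zs_def using xs T by (subst wprod_replicate) auto
      moreover have "set zs \<subseteq> T" "length zs = m" unfolding zs_def using xs T all x by auto
      ultimately show "x \<in> wprod G ` {xs. set xs \<subseteq> T \<and> length xs = m}" by blast
    qed
    then have "card W \<le> card (wprod G ` {xs. set xs \<subseteq> T \<and> length xs = m})"
      using finT by (intro card_mono) (auto simp: finite_lists_length_eq)
    also have "\<dots> \<le> card {xs. set xs \<subseteq> T \<and> length xs = m}" using finT
      by (intro card_image_le) (auto simp: finite_lists_length_eq)
    also have "\<dots> = card T ^ m" using finT by (rule card_lists_length_eq)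
    also have "\<dots> \<le> (2*n+1)^m" using cardT by (rule power_mono) simp
    finally show False using n' S(4) WG by simp
  qed
  define D where "D = Max (wlen G T ` W)"
  have D: "x \<in> W \<Longrightarrow> wlen G T x \<le> D" for x unfolding D_def using finW by simp
  define B where "B = real D + 1"
  have Bpos: "B > 0" unfolding B_def by simp
  have ne: "carrier G \<noteq> {}" using inf by auto
  define g where "g = from_nat_into (carrier G)"
  have grange: "range g = carrier G" unfolding g_def using range_from_nat_into[OF ne cnt] .
  define H where "H k = generate G (S \<union> g ` {..<k})" for k
  have Hc: "S \<union> g ` {..<k} \<subseteq> carrier G" for k using S grange by auto
  have Hsub: "subgroup (H k) G" for k unfolding H_def by (rule generate_is_subgroup[OF Hc])
  have Hfin: "finite (H k)" for k using lf Hc S unfolding H_def locally_finite_group_def by auto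
  have WH: "W \<subseteq> H k" for k unfolding WG H_def by (rule mono_generate) auto
  have Hmono: "k \<le> k' \<Longrightarrow> H k \<subseteq> H k'" for k k' unfolding H_def
    by (rule mono_generate) auto
  have Hall: "x \<in> carrier G \<Longrightarrow> \<exists>k. x \<in> H k" for x
  proof -
    assume "x \<in> carrier G"
    then obtain i where "x = g i" using grange by auto
    then have "x \<in> H (Suc i)" unfolding H_def by (intro generate.incl) auto
    then show ?thesis by blast
  qed
  define lv where "lv x = (LEAST k. x \<in> H k)" for x
  have lvH: "x \<in> H (lv x)" if x: "x \<in> carrier G" for x
  proof -
    from Hall[OF x] obtain k where "x \<in> H k" by blast
    then show ?thesis unfolding lv_def by (rule LeastI)
  qed
  have lv_le: "lv x \<le> k" if "x \<in> H k" for x k unfolding lv_def using that by (rule Least_le)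
  have lvW: "lv x = 0" if "x \<in> W" for x using lv_le[of x 0] WH[of 0] that by auto
  have lv_mult: "lv (x \<otimes> y) \<le> max (lv x) (lv y)" if xy: "x \<in> carrier G" "y \<in> carrier G" for x y
  proof -
    have "x \<in> H (max (lv x) (lv y))"
      using lvH[OF xy(1)] Hmono[of "lv x" "max (lv x) (lv y)"] by auto
    moreover have "y \<in> H (max (lv x) (lv y))"
      using lvH[OF xy(2)] Hmono[of "lv y" "max (lv x) (lv y)"] by auto
    ultimately have "x \<otimes> y \<in> H (max (lv x) (lv y))" by (rule subgroup.m_closed[OF Hsub])
    then show ?thesis by (rule lv_le)
  qed
  have lv_inv: "lv (inv x) \<le> lv x" if x: "x \<in> carrier G" for x
  proof -
    have "inv x \<in> H (lv x)" using lvH[OF x] by (rule subgroup.m_inv_closed[OF Hsub])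
    then show ?thesis by (rule lv_le)
  qed
  have lv_inv_eq: "x \<in> carrier G \<Longrightarrow> lv (inv x) = lv x" for x
    using lv_inv[of x] lv_inv[of "inv x"] by simp
  define lenf where "lenf x = (if x \<in> W then real (wlen G T x) else B + real (lv x))" for x
  have lenf_nonneg: "lenf x \<ge> 0" for x unfolding lenf_def using Bpos by simp
  have wlenW: "x \<in> W \<Longrightarrow> \<exists>xs. set xs \<subseteq> T \<and> wprod G xs = x" for x unfolding W_def by blast
  have lenf_zero: "x \<in> carrier G \<Longrightarrow> lenf x = 0 \<longleftrightarrow> x = \<one>" for x
  proof -
    assume x: "x \<in> carrier G"
    have oneW: "\<one> \<in> W" using TW T by auto
    show ?thesis
    proof (cases "x \<in> W")
      case True
      then show ?thesis unfolding lenf_def using wlen_zero[OF T] wlenW wlen_one[OF T] by fastforce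
    next
      case False
      then show ?thesis unfolding lenf_def using Bpos oneW by auto
    qed
  qed
  have winv: "inv x \<in> W" if "x \<in> W" for x using that by (rule subgroup.m_inv_closed[OF Wsub])
  have wmult: "x \<otimes> y \<in> W" if "x \<in> W" "y \<in> W" for x y using that by (rule subgroup.m_closed[OF Wsub])
  have lenf_inv: "x \<in> carrier G \<Longrightarrow> lenf (inv x) = lenf x" for x
  proof -
    assume x: "x \<in> carrier G"
    show ?thesis
    proof (cases "x \<in> W")
      case True
      then have "inv x \<in> W" by (rule winv)
      have "wlen G T (inv x) \<le> wlen G T x" using wlenW[OF True] wlen_inv[OF T] by blast
      moreover have "wlen G T (inv (inv x)) \<le> wlen G T (inv x)"
        using wlenW[OF \<open>inv x \<in> W\<close>] wlen_inv[OF T] by blast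
      ultimately show ?thesis using True \<open>inv x \<in> W\<close> x unfolding lenf_def by simp
    next
      case False
      have "inv x \<notin> W"
      proof
        assume "inv x \<in> W"
        then have "inv (inv x) \<in> W" by (rule winv)
        then show False using False x by simp
      qed
      then show ?thesis using False x lv_inv_eq unfolding lenf_def by simp
    qed
  qed
  have lenf_mult: "x \<in> carrier G \<Longrightarrow> y \<in> carrier G \<Longrightarrow> lenf (x \<otimes> y) \<le> lenf x + lenf y" for x y
  proof -
    assume x: "x \<in> carrier G" and y: "y \<in> carrier G"
    have lm: "lv (x \<otimes> y) \<le> max (lv x) (lv y)" by (rule lv_mult[OF x y])
    show ?thesis
    proof (cases "x \<in> W"; cases "y \<in> W")
      assume xW: "x \<in> W" and yW: "y \<in> W"
      have "x \<otimes> y \<in> W" using xW yW wmult by blast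
      moreover have "wlen G T (x \<otimes> y) \<le> wlen G T x + wlen G T y"
        using wlenW[OF xW] wlenW[OF yW] wlen_mult[OF T] by blast
      ultimately show ?thesis using xW yW unfolding lenf_def by simp
    next
      assume xW: "x \<in> W" and yW: "y \<notin> W"
      have "x \<otimes> y \<notin> W"
      proof
        assume "x \<otimes> y \<in> W"
        then have "inv x \<otimes> (x \<otimes> y) \<in> W" using winv[OF xW] wmult by blast
        then show False using yW x y by (simp add: m_assoc[symmetric])
      qed
      then show ?thesis using xW yW lm lvW[OF xW] unfolding lenf_def by simp
    next
      assume xW: "x \<notin> W" and yW: "y \<in> W"
      have "x \<otimes> y \<notin> W"
      proof
        assume "x \<otimes> y \<in> W"
        then have "(x \<otimes> y) \<otimes> inv y \<in> W" using winv[OF yW] wmult by blast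
        then show False using xW x y by (simp add: m_assoc)
      qed
      then show ?thesis using xW yW lm lvW[OF yW] unfolding lenf_def by simp
    next
      assume xW: "x \<notin> W" and yW: "y \<notin> W"
      show ?thesis
      proof (cases "x \<otimes> y \<in> W")
        case True
        then have "lenf (x \<otimes> y) \<le> real D" unfolding lenf_def using D by simp
        then show ?thesis using xW yW unfolding lenf_def B_def by simp
      next
        case False
        then show ?thesis using xW yW lm unfolding lenf_def using Bpos by simp
      qed
    qed
  qed
  define d where "d x y = lenf (inv x \<otimes> y)" for x y
  have metric: "proper_left_invariant_metric G d"
    unfolding proper_left_invariant_metric_def
  proof (intro conjI ballI allI)
    fix x y assume x: "x \<in> carrier G" and y: "y \<in> carrier G"
    have "inv x \<otimes> y = \<one> \<longleftrightarrow> x = y" using x y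
      by (metis inv_closed inv_inv inv_equality r_inv)
    then show "d x y = 0 \<longleftrightarrow> x = y" unfolding d_def using lenf_zero x y by simp
    have "inv (inv x \<otimes> y) = inv y \<otimes> x" using x y by (simp add: inv_mult_group)
    then show "d x y = d y x" unfolding d_def using lenf_inv[of "inv x \<otimes> y"] x y by simp
  next
    fix x y z assume x: "x \<in> carrier G" and y: "y \<in> carrier G" and z: "z \<in> carrier G"
    have "inv x \<otimes> z = (inv x \<otimes> y) \<otimes> (inv y \<otimes> z)" using x y z
      by (simp add: m_assoc[symmetric]) (simp add: m_assoc)
    then show "d x z \<le> d x y + d y z" unfolding d_def using lenf_mult x y z by simp
  next
    fix a b c assume a: "a \<in> carrier G" and b: "b \<in> carrier G" and c: "c \<in> carrier G"
    have "inv (a \<otimes> b) \<otimes> (a \<otimes> c) = inv b \<otimes> c" using a b c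
      by (simp add: inv_mult_group m_assoc[symmetric]) (simp add: m_assoc)
    then show "d (a \<otimes> b) (a \<otimes> c) = d b c" unfolding d_def by simp
  next
    fix x :: 'a and r :: real assume x: "x \<in> carrier G"
    have "{y \<in> carrier G. d x y \<le> r} \<subseteq> (\<lambda>z. x \<otimes> z) ` (W \<union> H (nat \<lfloor>r\<rfloor>))"
    proof
      fix y assume "y \<in> {y \<in> carrier G. d x y \<le> r}"
      then have y: "y \<in> carrier G" "lenf (inv x \<otimes> y) \<le> r" unfolding d_def by auto
      define z where "z = inv x \<otimes> y"
      have zc: "z \<in> carrier G" unfolding z_def using x y by simp
      have yz: "y = x \<otimes> z" unfolding z_def using x y by (simp add: m_assoc[symmetric])
      have "z \<in> W \<union> H (nat \<lfloor>r\<rfloor>)"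
      proof (cases "z \<in> W")
        case False
        then have "real (lv z) \<le> r" using y(2) Bpos unfolding z_def[symmetric] lenf_def by simp
        then have "lv z \<le> nat \<lfloor>r\<rfloor>" by linarith
        then show ?thesis using lvH[OF zc] Hmono by blast
      qed simp
      then show "y \<in> (\<lambda>z. x \<otimes> z) ` (W \<union> H (nat \<lfloor>r\<rfloor>))" using yz by blast
    qed
    moreover have "finite ((\<lambda>z. x \<otimes> z) ` (W \<union> H (nat \<lfloor>r\<rfloor>)))" using finW Hfin by simp
    ultimately show "finite {y \<in> carrier G. d x y \<le> r}" by (rule finite_subset)
  qed
  have chain: "set xs \<subseteq> T \<Longrightarrow> a \<in> carrier G \<Longrightarrow> (scale_step (carrier G) d 2)\<^sup>*\<^sup>* a (a \<otimes> wprod G xs)"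
    for xs a
  proof (induction xs arbitrary: a)
    case Nil then show ?case by simp
  next
    case (Cons s xs)
    have s: "s \<in> T" "s \<in> carrier G" using Cons T by auto
    have xs: "set xs \<subseteq> carrier G" using Cons T by auto
    have "wlen G T (wprod G [s]) \<le> 1" using wlen_le[OF T, of "[s]"] s by simp
    then have "wlen G T s \<le> 1" using s by simp
    then have "d a (a \<otimes> s) < 2" unfolding d_def lenf_def using Cons.prems s TW
      by (auto simp: m_assoc[symmetric])
    then have st: "scale_step (carrier G) d 2 a (a \<otimes> s)"
      unfolding scale_step_def using Cons.prems s by simp
    have "(scale_step (carrier G) d 2)\<^sup>*\<^sup>* (a \<otimes> s) ((a \<otimes> s) \<otimes> wprod G xs)"
      using Cons s by simp
    moreover have "(a \<otimes> s) \<otimes> wprod G xs = a \<otimes> wprod G (s # xs)"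
      using Cons.prems s xs by (simp add: m_assoc wprod_carrier)
    ultimately show ?case using st by (metis converse_rtranclp_into_rtranclp)
  qed
  obtain xs where xs: "set xs \<subseteq> T" "wprod G xs = h" using wlenW[OF h(1)] by blast
  have hc: "h \<in> carrier G" using h Wc by auto
  have "(scale_step (carrier G) d 2)\<^sup>*\<^sup>* \<one> h" using chain[OF xs(1), of \<one>] xs hc by simp
  moreover have "real m < d \<one> h" unfolding d_def lenf_def using h hc by simp
  ultimately show ?thesis using metric hc by blast
qed

end

theorem mainTheorem11:
  fixes G :: "('a, 'b) monoid_scheme" and f :: "real \<Rightarrow> real"
  assumes "group G"
    and "countable (carrier G)" and "infinite (carrier G)"
    and "locally_finite_group G"
    and "\<forall>x>0. f x \<ge> 0"
    and "mono_on {0<..} f"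
    and "filterlim f at_top at_top"
  shows "\<exists>d. proper_left_invariant_metric G d \<and> \<not> zero_dim_control (carrier G) d f"
proof -
  obtain d h where d: "proper_left_invariant_metric G d" and h: "h \<in> carrier G"
    "(scale_step (carrier G) d 2)\<^sup>*\<^sup>* \<one>\<^bsub>G\<^esub> h" "real (nat \<lceil>f 2\<rceil>) < d \<one>\<^bsub>G\<^esub> h"
    using group.key[OF assms(1,4,2,3), of "nat \<lceil>f 2\<rceil>"] by blast
  have one: "\<one>\<^bsub>G\<^esub> \<in> carrier G" using assms(1) by (simp add: group.is_monoid monoid.one_closed)
  have "h \<in> scale_component (carrier G) d 2 \<one>\<^bsub>G\<^esub>"
    unfolding scale_component_def using h by simp
  moreover have "\<one>\<^bsub>G\<^esub> \<in> scale_component (carrier G) d 2 \<one>\<^bsub>G\<^esub>"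
    unfolding scale_component_def using one by simp
  moreover have "f 2 < d \<one>\<^bsub>G\<^esub> h" using h(3) by linarith
  ultimately have "\<not> zero_dim_control (carrier G) d f"
    unfolding zero_dim_control_def using one by (meson linorder_not_le zero_less_numeral)
  with d show ?thesis by blast
qed

end
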